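(* Let $\mathbf{A}\in V(\mathsf{BCA})$. Put $O(\mathbf{A})=\{a\in A:J_2a=a\}$ and $D(\mathbf{A})=\{a\in A:J_2a=0\}$. For $a\in A$: (1) $a\in O(\mathbf{A})$ iff $a=J_2b$ for some $b\in A$; (2) $a\in D(\mathbf{A})$ iff $a=b\wedge\neg b$ for some $b\in A$. Moreover: (3) $O(\mathbf{A})$ is the universe of a subalgebra $\mathbf{O}(\mathbf{A})$ of $\mathbf{A}$ whose $\{\wedge,\vee,\neg,0,1\}$-reduct is a Boolean algebra; (4) $D(\mathbf{A})$ is the universe of a semilattice $\mathbf{D}(\mathbf{A})$ which is isomorphic to a quotient of $\mathbf{A}$. Here $D(\mathbf{A})$ contains $0$ and is closed under $\vee$ and $J_2$, and $\neg$ is set to be the identity on it.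
   Context: $\mathbf{WK}^e$ is the three-element algebra on $\{0,\tfrac12,1\}$ of type $\langle\wedge,\vee,\neg,J_2,0,1\rangle$. Its operations are: - $\neg$ swaps $0,1$ and fixes $\tfrac12$; - $\wedge,\vee$ are Boolean on $\{0,1\}$ and return $\tfrac12$ if some argument is $\tfrac12$; - $J_2(1)=1$ and $J_2(\tfrac12)=J_2(0)=0$. $\mathsf{BCA}=ISP(\mathbf{WK}^e)$ and $V(\mathsf{BCA})=HSP(\mathbf{WK}^e)$. A semilattice (in this type) is a member of $V(\mathsf{BCA})$ satisfying $\neg x\approx x$. Equivalently, its $\vee$ and $\wedge$ coincide, giving a join-semilattice with zero $0=1$, and $J_2$ is constantly $0$. *)

theory Defs
  imports Main
begin

datatype wk = W0 | Wh | W1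

fun wk_neg :: "wk \<Rightarrow> wk" where
  "wk_neg W0 = W1" | "wk_neg Wh = Wh" | "wk_neg W1 = W0"

definition wk_meet :: "wk \<Rightarrow> wk \<Rightarrow> wk" where
  "wk_meet x y = (if x = Wh \<or> y = Wh then Wh
                  else if x = W1 \<and> y = W1 then W1 else W0)"

definition wk_join :: "wk \<Rightarrow> wk \<Rightarrow> wk" where
  "wk_join x y = (if x = Wh \<or> y = Wh then Wh
                  else if x = W1 \<or> y = W1 then W1 else W0)"

fun wk_J2 :: "wk \<Rightarrow> wk" where
  "wk_J2 W1 = W1" | "wk_J2 Wh = W0" | "wk_J2 W0 = W0"

record 'a alg =
  car :: "'a set"
  meet :: "'a \<Rightarrow> 'a \<Rightarrow> 'a"
  join :: "'a \<Rightarrow> 'a \<Rightarrow> 'a"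
  neg :: "'a \<Rightarrow> 'a"
  jtwo :: "'a \<Rightarrow> 'a"
  zero_el :: 'a
  one_el :: 'a

definition subuniverse :: "'a set \<Rightarrow> 'a alg \<Rightarrow> bool" where
  "subuniverse B A \<longleftrightarrow> B \<subseteq> car A
     \<and> (\<forall>x\<in>B. \<forall>y\<in>B. meet A x y \<in> B \<and> join A x y \<in> B)
     \<and> (\<forall>x\<in>B. neg A x \<in> B \<and> jtwo A x \<in> B)
     \<and> zero_el A \<in> B \<and> one_el A \<in> B"

definition subalg :: "'a set \<Rightarrow> 'a alg \<Rightarrow> 'a alg" where
  "subalg B A = A\<lparr>car := B\<rparr>"

definition hom :: "('a \<Rightarrow> 'b) \<Rightarrow> 'a alg \<Rightarrow> 'b alg \<Rightarrow> bool" where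
  "hom f A B \<longleftrightarrow> (\<forall>x\<in>car A. f x \<in> car B)
     \<and> (\<forall>x\<in>car A. \<forall>y\<in>car A. f (meet A x y) = meet B (f x) (f y)
                              \<and> f (join A x y) = join B (f x) (f y))
     \<and> (\<forall>x\<in>car A. f (neg A x) = neg B (f x) \<and> f (jtwo A x) = jtwo B (f x))
     \<and> f (zero_el A) = zero_el B \<and> f (one_el A) = one_el B"

definition iso :: "('a \<Rightarrow> 'b) \<Rightarrow> 'a alg \<Rightarrow> 'b alg \<Rightarrow> bool" where
  "iso f A B \<longleftrightarrow> hom f A B \<and> bij_betw f (car A) (car B)"

definition wk_power :: "('i \<Rightarrow> wk) alg" where
  "wk_power = \<lparr> car = UNIV,
                meet = (\<lambda>f g i. wk_meet (f i) (g i)),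
                join = (\<lambda>f g i. wk_join (f i) (g i)),
                neg = (\<lambda>f i. wk_neg (f i)),
                jtwo = (\<lambda>f i. wk_J2 (f i)),
                zero_el = (\<lambda>i. W0),
                one_el = (\<lambda>i. W1) \<rparr>"

text \<open>Membership in V(BCA) = HSP(WK^e): A is a homomorphic image of a
  subalgebra of a power of WK^e (index type 'i).\<close>
definition in_VBCA :: "'i itself \<Rightarrow> 'a alg \<Rightarrow> bool" where
  "in_VBCA _ A \<longleftrightarrow> (\<exists>(S :: ('i \<Rightarrow> wk) set) (h :: ('i \<Rightarrow> wk) \<Rightarrow> 'a).
      subuniverse S wk_power \<and> hom h (subalg S wk_power) A \<and> h ` S = car A)"

definition is_semilattice :: "'i itself \<Rightarrow> 'a alg \<Rightarrow> bool" where
  "is_semilattice T A \<longleftrightarrow> in_VBCA T A \<and> (\<forall>x\<in>car A. neg A x = x)"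

definition boolean_alg :: "'a set \<Rightarrow> ('a \<Rightarrow> 'a \<Rightarrow> 'a) \<Rightarrow> ('a \<Rightarrow> 'a \<Rightarrow> 'a)
      \<Rightarrow> ('a \<Rightarrow> 'a) \<Rightarrow> 'a \<Rightarrow> 'a \<Rightarrow> bool" where
  "boolean_alg B m j n z u \<longleftrightarrow>
     (\<forall>x\<in>B. \<forall>y\<in>B. m x y \<in> B \<and> j x y \<in> B) \<and> (\<forall>x\<in>B. n x \<in> B) \<and> z \<in> B \<and> u \<in> B
   \<and> (\<forall>x\<in>B. \<forall>y\<in>B. m x y = m y x \<and> j x y = j y x)
   \<and> (\<forall>x\<in>B. \<forall>y\<in>B. \<forall>w\<in>B. m (m x y) w = m x (m y w) \<and> j (j x y) w = j x (j y w))
   \<and> (\<forall>x\<in>B. \<forall>y\<in>B. m x (j x y) = x \<and> j x (m x y) = x)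
   \<and> (\<forall>x\<in>B. \<forall>y\<in>B. \<forall>w\<in>B. m x (j y w) = j (m x y) (m x w))
   \<and> (\<forall>x\<in>B. j x z = x \<and> m x u = x)
   \<and> (\<forall>x\<in>B. m x (n x) = z \<and> j x (n x) = u)"

definition congruence :: "('a \<times> 'a) set \<Rightarrow> 'a alg \<Rightarrow> bool" where
  "congruence \<theta> A \<longleftrightarrow> equiv (car A) \<theta>
     \<and> (\<forall>x x' y y'. (x, x') \<in> \<theta> \<longrightarrow> (y, y') \<in> \<theta> \<longrightarrow>
          (meet A x y, meet A x' y') \<in> \<theta> \<and> (join A x y, join A x' y') \<in> \<theta>)
     \<and> (\<forall>x x'. (x, x') \<in> \<theta> \<longrightarrow> (neg A x, neg A x') \<in> \<theta> \<and> (jtwo A x, jtwo A x') \<in> \<theta>)"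

definition quot_alg :: "'a alg \<Rightarrow> ('a \<times> 'a) set \<Rightarrow> 'a set alg" where
  "quot_alg A \<theta> = \<lparr> car = car A // \<theta>,
      meet = (\<lambda>X Y. \<theta> `` {meet A (SOME x. x \<in> X) (SOME y. y \<in> Y)}),
      join = (\<lambda>X Y. \<theta> `` {join A (SOME x. x \<in> X) (SOME y. y \<in> Y)}),
      neg = (\<lambda>X. \<theta> `` {neg A (SOME x. x \<in> X)}),
      jtwo = (\<lambda>X. \<theta> `` {jtwo A (SOME x. x \<in> X)}),
      zero_el = \<theta> `` {zero_el A},
      one_el = \<theta> `` {one_el A} \<rparr>"

definition Oset :: "'a alg \<Rightarrow> 'a set" where
  "Oset A = {a \<in> car A. jtwo A a = a}"

definition Dset :: "'a alg \<Rightarrow> 'a set" where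
  "Dset A = {a \<in> car A. jtwo A a = zero_el A}"

text \<open>The semilattice D(A): join from A (meet coincides with join), neg is the
  identity, J2 from A, and both constants are 0.\<close>
definition D_alg :: "'a alg \<Rightarrow> 'a alg" where
  "D_alg A = \<lparr> car = Dset A, meet = join A, join = join A, neg = (\<lambda>x. x),
               jtwo = jtwo A, zero_el = zero_el A, one_el = zero_el A \<rparr>"

end

theory Submission
  imports Defs
begin

locale vb =
  fixes A :: "'a alg" and S :: "('i \<Rightarrow> wk) set" and h :: "('i \<Rightarrow> wk) \<Rightarrow> 'a"
  assumes sub: "subuniverse S wk_power"
    and hm: "hom h (subalg S wk_power) A"
    and img: "h ` S = car A"
begin

lemma cl:
  "f \<in> S \<Longrightarrow> g \<in> S \<Longrightarrow> (\<lambda>i. wk_meet (f i) (g i)) \<in> S"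
  "f \<in> S \<Longrightarrow> g \<in> S \<Longrightarrow> (\<lambda>i. wk_join (f i) (g i)) \<in> S"
  "f \<in> S \<Longrightarrow> (\<lambda>i. wk_neg (f i)) \<in> S"
  "f \<in> S \<Longrightarrow> (\<lambda>i. wk_J2 (f i)) \<in> S"
  "(\<lambda>i. W0) \<in> S"
  "(\<lambda>i. W1) \<in> S"
  using sub unfolding subuniverse_def wk_power_def by auto

lemma hr:
  "f \<in> S \<Longrightarrow> g \<in> S \<Longrightarrow> meet A (h f) (h g) = h (\<lambda>i. wk_meet (f i) (g i))"
  "f \<in> S \<Longrightarrow> g \<in> S \<Longrightarrow> join A (h f) (h g) = h (\<lambda>i. wk_join (f i) (g i))"
  "f \<in> S \<Longrightarrow> neg A (h f) = h (\<lambda>i. wk_neg (f i))"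
  "f \<in> S \<Longrightarrow> jtwo A (h f) = h (\<lambda>i. wk_J2 (f i))"
  "zero_el A = h (\<lambda>i. W0)"
  "one_el A = h (\<lambda>i. W1)"
  using hm unfolding hom_def subalg_def wk_power_def by auto

lemma hc: "(\<And>i. F i = G i) \<Longrightarrow> h F = h G" by metis

lemma pre: "a \<in> car A \<Longrightarrow> \<exists>f\<in>S. a = h f" using img by auto

lemma incar: "f \<in> S \<Longrightarrow> h f \<in> car A" using img by auto

lemma cc:
  "a \<in> car A \<Longrightarrow> b \<in> car A \<Longrightarrow> meet A a b \<in> car A"
  "a \<in> car A \<Longrightarrow> b \<in> car A \<Longrightarrow> join A a b \<in> car A"
  "a \<in> car A \<Longrightarrow> neg A a \<in> car A"
  "a \<in> car A \<Longrightarrow> jtwo A a \<in> car A"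
  "zero_el A \<in> car A"
  "one_el A \<in> car A"
  by (auto dest!: pre simp: hr cl incar)

lemmas wd = wk_meet_def wk_join_def

lemma id1:
  assumes "a \<in> car A"
  shows "jtwo A (jtwo A a) = jtwo A a"
    "join A (meet A a (neg A a)) (jtwo A a) = a"
    "join A a (zero_el A) = a"
    "meet A a (one_el A) = a"
    "jtwo A (meet A a (neg A a)) = zero_el A"
    "jtwo A (neg A (jtwo A a)) = neg A (jtwo A a)"
    "jtwo A (zero_el A) = zero_el A"
    "jtwo A (one_el A) = one_el A"
    "meet A (jtwo A a) (neg A (jtwo A a)) = zero_el A"
    "join A (jtwo A a) (neg A (jtwo A a)) = one_el A"
    "meet A (neg A a) (neg A (neg A a)) = meet A a (neg A a)"
    "meet A (jtwo A a) (neg A (jtwo A a)) = zero_el A"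
    "meet A (zero_el A) (neg A (zero_el A)) = zero_el A"
    "meet A (one_el A) (neg A (one_el A)) = zero_el A"
    "meet A (meet A a (neg A a)) (neg A (meet A a (neg A a))) = meet A a (neg A a)"
  using pre[OF assms] 
  by (auto simp: hr cl intro!: hc; case_tac "f i"; simp add: wd)+

lemma id2:
  assumes "a \<in> car A" "b \<in> car A"
  shows "meet A a b = meet A b a" "join A a b = join A b a"
    "jtwo A (meet A (jtwo A a) (jtwo A b)) = meet A (jtwo A a) (jtwo A b)"
    "jtwo A (join A (jtwo A a) (jtwo A b)) = join A (jtwo A a) (jtwo A b)"
    "meet A (jtwo A a) (join A (jtwo A a) (jtwo A b)) = jtwo A a"
    "join A (jtwo A a) (meet A (jtwo A a) (jtwo A b)) = jtwo A a"
    "meet A (meet A a b) (neg A (meet A a b)) = join A (meet A a (neg A a)) (meet A b (neg A b))"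
    "meet A (join A a b) (neg A (join A a b)) = join A (meet A a (neg A a)) (meet A b (neg A b))"
    "jtwo A (join A (meet A a (neg A a)) (meet A b (neg A b))) = zero_el A"
  using pre[OF assms(1)] pre[OF assms(2)]
  by (auto simp: hr cl intro!: hc; case_tac "f i"; case_tac "fa i"; simp add: wd)+

lemma id3:
  assumes "a \<in> car A" "b \<in> car A" "c \<in> car A"
  shows "meet A (meet A a b) c = meet A a (meet A b c)"
    "join A (join A a b) c = join A a (join A b c)"
    "meet A a (join A b c) = join A (meet A a b) (meet A a c)"
  using pre[OF assms(1)] pre[OF assms(2)] pre[OF assms(3)]
  by (auto simp: hr cl intro!: hc; case_tac "f i"; case_tac "fa i"; case_tac "fb i"; simp add: wd)+


definition th where "th = {(x, y). x \<in> car A \<and> y \<in> car A \<and> meet A x (neg A x) = meet A y (neg A y)}"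

lemma dcar: "a \<in> car A \<Longrightarrow> meet A a (neg A a) \<in> car A" by (simp add: cc)

lemma dfix: "a \<in> Dset A \<Longrightarrow> meet A a (neg A a) = a"
proof -
  assume a: "a \<in> Dset A"
  hence c: "a \<in> car A" and j: "jtwo A a = zero_el A" by (auto simp: Dset_def)
  have "a = join A (meet A a (neg A a)) (jtwo A a)" using id1(2)[OF c] by simp
  also have "\<dots> = meet A a (neg A a)" using j id1(3)[OF dcar[OF c]] by simp
  finally show ?thesis by simp
qed

lemma Oiff: "a \<in> car A \<Longrightarrow> a \<in> Oset A \<longleftrightarrow> (\<exists>b\<in>car A. a = jtwo A b)"
  unfolding Oset_def using id1(1) by (auto, metis)

lemma Diff: "a \<in> car A \<Longrightarrow> a \<in> Dset A \<longleftrightarrow> (\<exists>b\<in>car A. a = meet A b (neg A b))"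
proof
  assume "a \<in> car A" "a \<in> Dset A"
  then show "\<exists>b\<in>car A. a = meet A b (neg A b)" using dfix[of a] by metis
next
  assume "a \<in> car A" "\<exists>b\<in>car A. a = meet A b (neg A b)"
  then obtain b where "b \<in> car A" "a = meet A b (neg A b)" by blast
  then show "a \<in> Dset A" using id1(5)[of b] \<open>a \<in> car A\<close> by (simp add: Dset_def)
qed

lemma Osub: "subuniverse (Oset A) A"
  unfolding subuniverse_def
proof (intro conjI ballI)
  show "Oset A \<subseteq> car A" by (auto simp: Oset_def)
next
  fix x y assume x: "x \<in> Oset A" and y: "y \<in> Oset A"
  hence xc: "x \<in> car A" "jtwo A x = x" and yc: "y \<in> car A" "jtwo A y = y" by (auto simp: Oset_def)
  show "meet A x y \<in> Oset A" using id2(3)[OF xc(1) yc(1)] xc yc cc by (simp add: Oset_def)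
  show "join A x y \<in> Oset A" using id2(4)[OF xc(1) yc(1)] xc yc cc by (simp add: Oset_def)
next
  fix x assume x: "x \<in> Oset A"
  hence xc: "x \<in> car A" "jtwo A x = x" by (auto simp: Oset_def)
  show "neg A x \<in> Oset A" using id1(6)[OF xc(1)] xc cc by (simp add: Oset_def)
  show "jtwo A x \<in> Oset A" using id1(1)[OF xc(1)] xc cc by (simp add: Oset_def)
next
  show "zero_el A \<in> Oset A" using cc id1(7)[OF cc(5)] by (simp add: Oset_def)
  show "one_el A \<in> Oset A" using cc id1(8)[OF cc(5)] by (simp add: Oset_def)
qed

lemma Obool: "boolean_alg (Oset A) (meet A) (join A) (neg A) (zero_el A) (one_el A)"
proof -
  have O: "\<And>x. x \<in> Oset A \<Longrightarrow> x \<in> car A \<and> jtwo A x = x" by (auto simp: Oset_def)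
  have s: "subuniverse (Oset A) A" by (rule Osub)
  show ?thesis unfolding boolean_alg_def
  proof (intro conjI ballI)
    fix x y assume "x \<in> Oset A" "y \<in> Oset A"
    then show "meet A x y \<in> Oset A" "join A x y \<in> Oset A" using s by (auto simp: subuniverse_def)
  next
    fix x assume "x \<in> Oset A" then show "neg A x \<in> Oset A" using s by (auto simp: subuniverse_def)
  next
    show "zero_el A \<in> Oset A" "one_el A \<in> Oset A" using s by (auto simp: subuniverse_def)
  next
    fix x y assume x: "x \<in> Oset A" and y: "y \<in> Oset A"
    note xx = O[OF x] and yy = O[OF y]
    show "meet A x y = meet A y x" "join A x y = join A y x" using id2(1,2) xx yy by auto
    show "meet A x (join A x y) = x" using id2(5)[of x y] xx yy by simp
    show "join A x (meet A x y) = x" using id2(6)[of x y] xx yy by simp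
    fix w assume w: "w \<in> Oset A"
    note ww = O[OF w]
    show "meet A (meet A x y) w = meet A x (meet A y w)" "join A (join A x y) w = join A x (join A y w)"
      "meet A x (join A y w) = join A (meet A x y) (meet A x w)" using id3 xx yy ww by auto
  next
    fix x assume x: "x \<in> Oset A"
    note xx = O[OF x]
    show "join A x (zero_el A) = x" "meet A x (one_el A) = x" using id1(3,4) xx by auto
    show "meet A x (neg A x) = zero_el A" using id1(9)[of x] xx by simp
    show "join A x (neg A x) = one_el A" using id1(10)[of x] xx by simp
  qed
qed

lemma Dzero: "zero_el A \<in> Dset A" unfolding Dset_def using cc id1(7) by auto

lemma Djoin: "x \<in> Dset A \<Longrightarrow> y \<in> Dset A \<Longrightarrow> join A x y \<in> Dset A"
proof -
  assume x: "x \<in> Dset A" and y: "y \<in> Dset A"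
  have xc: "x \<in> car A" and yc: "y \<in> car A" using x y by (auto simp: Dset_def)
  have "jtwo A (join A x y) = zero_el A"
    using id2(9)[OF xc yc] dfix[OF x] dfix[OF y] by simp
  then show ?thesis using cc(2)[OF xc yc] by (simp add: Dset_def)
qed

lemma Djtwo: "x \<in> Dset A \<Longrightarrow> jtwo A x \<in> Dset A"
  unfolding Dset_def using cc id1(7) by auto


lemma Dsemi: "is_semilattice TYPE('i) (D_alg A)"
proof -
  define h' where "h' = (\<lambda>f. meet A (h f) (neg A (h f)))"
  have "hom h' (subalg S wk_power) (D_alg A)"
    unfolding hom_def
  proof (intro conjI ballI)
    fix f assume "f \<in> car (subalg S wk_power)"
    hence f: "f \<in> S" by (simp add: subalg_def)
    have fc: "h f \<in> car A" using f incar by blast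
    show "h' f \<in> car (D_alg A)" unfolding h'_def D_alg_def using Diff[OF dcar[OF fc]] dcar[OF fc] fc by auto
    have "neg A (h f) = h (neg (subalg S wk_power) f)" using hr(3)[OF f] by (simp add: subalg_def wk_power_def)
    then show "h' (neg (subalg S wk_power) f) = neg (D_alg A) (h' f)"
      unfolding h'_def D_alg_def using id1(11)[OF fc] by simp
    have "jtwo A (h f) = h (jtwo (subalg S wk_power) f)" using hr(4)[OF f] by (simp add: subalg_def wk_power_def)
    then show "h' (jtwo (subalg S wk_power) f) = jtwo (D_alg A) (h' f)"
      unfolding h'_def D_alg_def using id1(5)[OF fc] id1(12)[OF fc] by (metis alg.select_convs(5))
    fix g assume "g \<in> car (subalg S wk_power)"
    hence g: "g \<in> S" by (simp add: subalg_def)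
    have gc: "h g \<in> car A" using g incar by blast
    have "meet A (h f) (h g) = h (meet (subalg S wk_power) f g)" using hr(1)[OF f g] by (simp add: subalg_def wk_power_def)
    then show "h' (meet (subalg S wk_power) f g) = meet (D_alg A) (h' f) (h' g)"
      unfolding h'_def D_alg_def using id2(7)[OF fc gc] by simp
    have "join A (h f) (h g) = h (join (subalg S wk_power) f g)" using hr(2)[OF f g] by (simp add: subalg_def wk_power_def)
    then show "h' (join (subalg S wk_power) f g) = join (D_alg A) (h' f) (h' g)"
      unfolding h'_def D_alg_def using id2(8)[OF fc gc] by simp
  next
    have "zero_el A = h (zero_el (subalg S wk_power))" using hr(5) by (simp add: subalg_def wk_power_def)
    then show "h' (zero_el (subalg S wk_power)) = zero_el (D_alg A)"
      unfolding h'_def D_alg_def using id1(13)[OF cc(5)] by simp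
    have "one_el A = h (one_el (subalg S wk_power))" using hr(6) by (simp add: subalg_def wk_power_def)
    then show "h' (one_el (subalg S wk_power)) = one_el (D_alg A)"
      unfolding h'_def D_alg_def using id1(14)[OF cc(5)] by simp
  qed
  moreover have "h' ` S = car (D_alg A)"
  proof
    show "h' ` S \<subseteq> car (D_alg A)" unfolding h'_def D_alg_def using Diff dcar incar by auto
    show "car (D_alg A) \<subseteq> h' ` S"
    proof
      fix d assume "d \<in> car (D_alg A)"
      hence d: "d \<in> Dset A" by (simp add: D_alg_def)
      then obtain f where f: "f \<in> S" "d = h f" using pre by (auto simp: Dset_def)
      have "d = h' f" unfolding h'_def using dfix[OF d] f by simp
      then show "d \<in> h' ` S" using f by blast
    qed
  qed
  ultimately show ?thesis unfolding is_semilattice_def in_VBCA_def using sub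
    by (auto simp: D_alg_def)
qed

lemma th_equiv: "equiv (car A) th"
  unfolding equiv_def refl_on_def sym_def trans_def th_def by auto

lemma th_cong: "congruence th A"
  unfolding congruence_def
proof (intro conjI allI impI th_equiv)
  fix x x' y y' assume xx: "(x, x') \<in> th" and yy: "(y, y') \<in> th"
  then have c: "x \<in> car A" "x' \<in> car A" "y \<in> car A" "y' \<in> car A"
    and e: "meet A x (neg A x) = meet A x' (neg A x')" "meet A y (neg A y) = meet A y' (neg A y')"
    by (auto simp: th_def)
  show "(meet A x y, meet A x' y') \<in> th" unfolding th_def using cc c e id2(7)[of x y] id2(7)[of x' y'] by simp
  show "(join A x y, join A x' y') \<in> th" unfolding th_def using cc c e id2(8)[of x y] id2(8)[of x' y'] by simp
next
  fix x x' assume xx: "(x, x') \<in> th"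
  then have c: "x \<in> car A" "x' \<in> car A"
    and e: "meet A x (neg A x) = meet A x' (neg A x')" by (auto simp: th_def)
  show "(neg A x, neg A x') \<in> th" unfolding th_def using cc c e id1(11)[of x] id1(11)[of x'] by simp
  show "(jtwo A x, jtwo A x') \<in> th" unfolding th_def using cc c id1(12)[of x] id1(12)[of x'] by simp
qed

lemma cls_eq: "a \<in> car A \<Longrightarrow> b \<in> car A \<Longrightarrow> th `` {a} = th `` {b} \<longleftrightarrow> meet A a (neg A a) = meet A b (neg A b)"
  using eq_equiv_class_iff[OF th_equiv] by (simp add: th_def)

lemma some_cls: "a \<in> car A \<Longrightarrow> (SOME x. x \<in> th `` {a}) \<in> car A \<and>
   meet A (SOME x. x \<in> th `` {a}) (neg A (SOME x. x \<in> th `` {a})) = meet A a (neg A a)"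
proof -
  assume a: "a \<in> car A"
  have "a \<in> th `` {a}" using a by (simp add: th_def)
  hence "(SOME x. x \<in> th `` {a}) \<in> th `` {a}" by (rule someI)
  then show ?thesis by (auto simp: th_def)
qed

lemma Diso: "iso (\<lambda>d. th `` {d}) (D_alg A) (quot_alg A th)"
proof -
  have Dc: "\<And>d. d \<in> Dset A \<Longrightarrow> d \<in> car A" by (simp add: Dset_def)
  have hom: "hom (\<lambda>d. th `` {d}) (D_alg A) (quot_alg A th)"
    unfolding hom_def D_alg_def quot_alg_def
  proof (simp only: alg.select_convs, intro conjI ballI)
    fix x assume x: "x \<in> Dset A"
    show "th `` {x} \<in> car A // th" using Dc[OF x] by (rule quotientI)
    note xc = Dc[OF x]
    note sx = some_cls[OF xc]
    have sc: "(SOME xa. xa \<in> th `` {x}) \<in> car A" using sx by blast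
    show "th `` {x} = th `` {neg A (SOME xa. xa \<in> th `` {x})}"
      using xc cc(3)[OF sc] id1(11)[OF sc] sx by (simp add: cls_eq)
    show "th `` {jtwo A x} = th `` {jtwo A (SOME xa. xa \<in> th `` {x})}"
      using cc(4)[OF xc] cc(4)[OF sc] id1(12)[OF sc] id1(12)[OF xc] by (simp add: cls_eq)
    fix y assume y: "y \<in> Dset A"
    note yc = Dc[OF y]
    note sy = some_cls[OF yc]
    have sc': "(SOME ya. ya \<in> th `` {y}) \<in> car A" using sy by blast
    show "th `` {join A x y} = th `` {meet A (SOME xa. xa \<in> th `` {x}) (SOME ya. ya \<in> th `` {y})}"
      using cc(1)[OF sc sc'] cc(2)[OF xc yc] id2(7)[OF sc sc'] id2(8)[OF xc yc] sx sy by (simp add: cls_eq)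
    show "th `` {join A x y} = th `` {join A (SOME xa. xa \<in> th `` {x}) (SOME ya. ya \<in> th `` {y})}"
      using cc(2)[OF sc sc'] cc(2)[OF xc yc] id2(8)[OF sc sc'] id2(8)[OF xc yc] sx sy by (simp add: cls_eq)
  next
    show "th `` {zero_el A} = th `` {zero_el A}" by simp
    show "th `` {zero_el A} = th `` {one_el A}"
      using cc(5,6) id1(13,14)[OF cc(5)] by (simp add: cls_eq)
  qed
  have bij: "bij_betw (\<lambda>d. th `` {d}) (Dset A) (car A // th)"
    unfolding bij_betw_def
  proof
    show "inj_on (\<lambda>d. th `` {d}) (Dset A)"
    proof (rule inj_onI)
      fix x y assume x: "x \<in> Dset A" and y: "y \<in> Dset A" and e: "th `` {x} = th `` {y}"
      have "meet A x (neg A x) = meet A y (neg A y)" using cls_eq[OF Dc[OF x] Dc[OF y]] e by blast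
      then show "x = y" using dfix[OF x] dfix[OF y] by simp
    qed
    show "(\<lambda>d. th `` {d}) ` Dset A = car A // th"
    proof
      show "(\<lambda>d. th `` {d}) ` Dset A \<subseteq> car A // th"
      proof
        fix X assume "X \<in> (\<lambda>d. th `` {d}) ` Dset A"
        then obtain d where "d \<in> Dset A" "X = th `` {d}" by blast
        then show "X \<in> car A // th" using Dc quotientI by metis
      qed
      show "car A // th \<subseteq> (\<lambda>d. th `` {d}) ` Dset A"
      proof
        fix X assume "X \<in> car A // th"
        then obtain a where a: "a \<in> car A" "X = th `` {a}" by (rule quotientE)
        have m: "meet A a (neg A a) \<in> Dset A" using Diff[OF dcar[OF a(1)]] a(1) by blast
        have "th `` {a} = th `` {meet A a (neg A a)}" using cls_eq[OF a(1) dcar[OF a(1)]] id1(15)[OF a(1)] by simp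
        then have "X = th `` {meet A a (neg A a)}" using a(2) by simp
        then show "X \<in> (\<lambda>d. th `` {d}) ` Dset A" using m by blast
      qed
    qed
  qed
  have "car (D_alg A) = Dset A" "car (quot_alg A th) = car A // th" by (simp_all add: D_alg_def quot_alg_def)
  then show ?thesis unfolding iso_def using hom bij by simp
qed

end

theorem lemma4p12:
  fixes A :: "'a alg"
  assumes "in_VBCA TYPE('i) A"
  shows "(\<forall>a\<in>car A. a \<in> Oset A \<longleftrightarrow> (\<exists>b\<in>car A. a = jtwo A b))
       \<and> (\<forall>a\<in>car A. a \<in> Dset A \<longleftrightarrow> (\<exists>b\<in>car A. a = meet A b (neg A b)))
       \<and> subuniverse (Oset A) A
       \<and> boolean_alg (Oset A) (meet A) (join A) (neg A) (zero_el A) (one_el A)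
       \<and> zero_el A \<in> Dset A
       \<and> (\<forall>x\<in>Dset A. \<forall>y\<in>Dset A. join A x y \<in> Dset A)
       \<and> (\<forall>x\<in>Dset A. jtwo A x \<in> Dset A)
       \<and> is_semilattice TYPE('i) (D_alg A)
       \<and> (\<exists>\<theta> f. congruence \<theta> A \<and> iso f (D_alg A) (quot_alg A \<theta>))"
proof -
  obtain S :: "('i \<Rightarrow> wk) set" and h :: "('i \<Rightarrow> wk) \<Rightarrow> 'a" where
    "subuniverse S wk_power" "hom h (subalg S wk_power) A" "h ` S = car A"
    using assms unfolding in_VBCA_def by blast
  then interpret v: vb A S h by unfold_locales
  have e: "\<exists>\<theta> f. congruence \<theta> A \<and> iso f (D_alg A) (quot_alg A \<theta>)"
    using v.th_cong v.Diso by blast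
  show ?thesis
    apply (intro conjI ballI)
    apply (erule v.Oiff)
    apply (erule v.Diff)
    apply (rule v.Osub)
    apply (rule v.Obool)
    apply (rule v.Dzero)
    apply (erule (1) v.Djoin)
    apply (erule v.Djtwo)
    apply (rule v.Dsemi)
    apply (rule e)
    done
qed

end
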